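(* Let $u^{(1)},\ldots,u^{(k)}\in(\mathbb{N}\cup\{0\})^m$ and put $M:=\bigcup_{j=1}^k\{x\in\mathbb{R}^m:0\leq x\leq u^{(j)}\}$ (entrywise order). Then $M\cap\mathbb{Z}^m$ is the unique subset $C\subseteq M$ with $|C|=|M\cap\mathbb{Z}^m|$ whose minimum distance $\min\{\|x-y\|_\infty:x,y\in C,x\neq y\}$ equals $1$. *)

theory Defs
  imports "HOL-Analysis.Analysis"
begin

definition int_lattice :: "(real^'m) set" where
  "int_lattice = {x. \<forall>i. x $ i \<in> \<int>}"

definition box_union :: "nat \<Rightarrow> (nat \<Rightarrow> real^'m) \<Rightarrow> (real^'m) set" where
  "box_union k u = (\<Union>j\<in>{1..k}. {x. 0 \<le> x \<and> x \<le> u j})"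

definition min_dist_inf :: "(real^'m) set \<Rightarrow> real" where
  "min_dist_inf C = Min {infnorm (x - y) | x y. x \<in> C \<and> y \<in> C \<and> x \<noteq> y}"

end

theory Submission
  imports Defs
begin

lemma infnorm_cart_Max: "infnorm (x::real^'n) = Max (range (\<lambda>i. \<bar>x$i\<bar>))"
proof -
  have "{\<bar>x$i\<bar> |i. i\<in>UNIV} = range (\<lambda>i. \<bar>x$i\<bar>)" by auto
  then show ?thesis unfolding infnorm_cart by (simp add: cSup_eq_Max)
qed

lemma infnorm_lt1: "(\<And>i. \<bar>(x::real^'n)$i\<bar> < 1) \<Longrightarrow> infnorm x < 1"
  unfolding infnorm_cart_Max by (subst Max_less_iff) auto

lemma infnorm_le1: "(\<And>i. \<bar>(x::real^'n)$i\<bar> \<le> 1) \<Longrightarrow> infnorm x \<le> 1"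
  unfolding infnorm_cart_Max by (subst Max_le_iff) auto

lemma floor_close: "\<lfloor>a\<rfloor> = \<lfloor>b\<rfloor> \<Longrightarrow> \<bar>a - b\<bar> < (1::real)"
  using floor_correct[of a] floor_correct[of b] unfolding abs_less_iff by linarith
lemma ceil_close: "\<lceil>a\<rceil> = \<lceil>b\<rceil> \<Longrightarrow> \<bar>a - b\<bar> < (1::real)"
  using ceiling_correct[of a] ceiling_correct[of b] unfolding abs_less_iff by linarith

definition fl :: "real^'m \<Rightarrow> real^'m" where "fl x = (\<chi> i. of_int \<lfloor>x$i\<rfloor>)"
definition cl :: "real^'m \<Rightarrow> real^'m" where "cl x = (\<chi> i. of_int \<lceil>x$i\<rceil>)"

theorem lemma4p2:
  fixes u :: "nat \<Rightarrow> real^'m" and k :: nat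
  assumes "\<And>j i. j \<in> {1..k} \<Longrightarrow> u j $ i \<in> \<nat>"
    and "\<exists>j\<in>{1..k}. u j \<noteq> 0"
  shows "\<forall>C. (C \<subseteq> box_union k u \<and> card C = card (box_union k u \<inter> int_lattice)
                \<and> min_dist_inf C = 1)
             \<longleftrightarrow> C = box_union k u \<inter> int_lattice"
proof -
  define M where "M = box_union k u"
  define L where "L = M \<inter> int_lattice"
  have memM: "x \<in> M \<longleftrightarrow> (\<exists>j\<in>{1..k}. \<forall>i. 0 \<le> x$i \<and> x$i \<le> u j $ i)" for x
    unfolding M_def box_union_def by (auto simp: less_eq_vec_def)
  have uint: "u j $ i \<in> \<int>" "u j $ i \<ge> 0" if "j \<in> {1..k}" for j i
    using assms(1)[OF that, of i] Nats_subset_Ints by (auto simp: Nats_def)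
  obtain j0 where j0: "j0 \<in> {1..k}" "u j0 \<noteq> 0" using assms(2) by blast
  then obtain i0 where i0: "u j0 $ i0 \<noteq> 0" by (metis vec_eq_iff zero_index)
  have ui0: "u j0 $ i0 \<ge> 1"
  proof -
    obtain n where "u j0 $ i0 = of_nat n" using assms(1)[OF j0(1), of i0] by (auto simp: Nats_def)
    with i0 show ?thesis by auto
  qed
  define e :: "real^'m" where "e = axis i0 1"
  have intdist: "infnorm (x - y) \<ge> 1" if xyL: "x \<in> int_lattice" "y \<in> int_lattice" "x \<noteq> y" for x y
  proof -
    obtain i where i: "x$i \<noteq> y$i" using xyL(3) by (metis vec_eq_iff)
    obtain a b where ab: "x$i = of_int a" "y$i = of_int b" using xyL(1,2)
      unfolding int_lattice_def by (metis Ints_cases mem_Collect_eq)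
    have "a \<noteq> b" using i ab by auto
    then have "\<bar>x$i - y$i\<bar> \<ge> 1" using ab by (simp flip: of_int_diff)
    also have "\<dots> \<le> infnorm (x - y)" using component_le_infnorm_cart[of "x - y" i] by simp
    finally show ?thesis .
  qed
  define N where "N = Max ((\<lambda>(j,i). \<lceil>u j $ i\<rceil>) ` ({1..k} \<times> UNIV))"
  have N: "x$i \<le> of_int N" if xM: "x \<in> M" for x i
  proof -
    obtain j where j: "j \<in> {1..k}" "\<forall>i. 0 \<le> x$i \<and> x$i \<le> u j $ i" using xM memM by blast
    have "\<lceil>u j $ i\<rceil> \<le> N" unfolding N_def by (rule Max_ge) (use j in auto)
    then show ?thesis using j(2) by (meson le_of_int_ceiling order_trans of_int_le_iff)
  qed
  have finL: "finite L"
  proof -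
    have "L \<subseteq> (\<lambda>f. \<chi> i. of_int (f i)) ` (UNIV \<rightarrow>\<^sub>E {0..N})"
    proof
      fix x assume x: "x \<in> L"
      have xi: "x$i \<in> \<int>" for i using x unfolding L_def int_lattice_def by auto
      have "x = (\<chi> i. of_int \<lfloor>x$i\<rfloor>)" using xi by (simp add: vec_eq_iff)
      moreover have "(\<lambda>i. \<lfloor>x$i\<rfloor>) \<in> UNIV \<rightarrow>\<^sub>E {0..N}"
      proof -
        have "x \<in> M" using x unfolding L_def by auto
        then have "0 \<le> x$i \<and> x$i \<le> of_int N" for i using N[of x i] memM[of x] by auto
        then have "0 \<le> \<lfloor>x$i\<rfloor> \<and> \<lfloor>x$i\<rfloor> \<le> N" for i
          by (metis floor_le_iff floor_mono floor_of_int zero_le_floor)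
        then show ?thesis by auto
      qed
      ultimately show "x \<in> (\<lambda>f. \<chi> i. of_int (f i)) ` (UNIV \<rightarrow>\<^sub>E {0..N})" by (rule image_eqI)
    qed
    then show ?thesis by (rule finite_subset) (intro finite_imageI finite_PiE; simp)
  qed
  have zL: "0 \<in> L" using j0 uint unfolding L_def int_lattice_def by (auto simp: memM)
  have eL: "e \<in> L" using j0 uint ui0 unfolding L_def int_lattice_def e_def
    by (auto simp: memM axis_def)
  have e0: "e \<noteq> 0" unfolding e_def by (simp add: axis_eq_0_iff)
  have ine: "infnorm (e - 0) = 1"
  proof (rule antisym)
    show "infnorm (e - 0) \<le> 1" by (rule infnorm_le1) (auto simp: e_def axis_def)
    show "1 \<le> infnorm (e - 0)" using intdist[of e 0] eL zL e0 unfolding L_def by auto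
  qed
  have mdL: "min_dist_inf L = 1"
  proof -
    let ?S = "{infnorm (x - y) | x y. x \<in> L \<and> y \<in> L \<and> x \<noteq> y}"
    have "?S = (\<lambda>(x,y). infnorm (x - y)) ` {(x,y). x \<in> L \<and> y \<in> L \<and> x \<noteq> y}" by auto
    moreover have "finite {(x,y). x \<in> L \<and> y \<in> L \<and> x \<noteq> y}"
      by (rule finite_subset[of _ "L \<times> L"]) (use finL in auto)
    ultimately have finS: "finite ?S" by simp
    have "1 \<in> ?S" using ine eL zL e0 by (metis (mono_tags, lifting) mem_Collect_eq)
    moreover have "\<forall>s\<in>?S. 1 \<le> s" using intdist unfolding L_def by auto
    ultimately show ?thesis unfolding min_dist_inf_def
      by (intro antisym Min_le finS) (auto intro!: Min.boundedI finS)
  qed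
  have cardL: "card L \<ge> 2"
  proof -
    have "{0, e} \<subseteq> L" using zL eL by auto
    then have "card {0,e} \<le> card L" using finL by (rule card_mono[rotated])
    then show ?thesis using e0 by simp
  qed
  have main: "C = L" if C: "C \<subseteq> M" "card C = card L" "min_dist_inf C = 1" for C
  proof -
    have finC: "finite C" using C(2) cardL card.infinite by fastforce
    let ?P = "{(x,y). x \<in> C \<and> y \<in> C \<and> x \<noteq> y}"
    have finS: "finite {infnorm (x - y) | x y. x \<in> C \<and> y \<in> C \<and> x \<noteq> y}"
    proof -
      have "{infnorm (x - y) | x y. x \<in> C \<and> y \<in> C \<and> x \<noteq> y} = (\<lambda>(x,y). infnorm (x - y)) ` ?P" by auto
      moreover have "finite ?P" by (rule finite_subset[of _ "C \<times> C"]) (use finC in auto)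
      ultimately show ?thesis by simp
    qed
    have sep: "1 \<le> infnorm (x - y)" if "x \<in> C" "y \<in> C" "x \<noteq> y" for x y
      using C(3) Min_le[OF finS, of "infnorm (x - y)"] that unfolding min_dist_inf_def by (metis (mono_tags, lifting) mem_Collect_eq)
    have inj: "inj_on (\<lambda>x. (\<chi> i. of_int (g (x$i)) :: real^'m)) C"
      if g: "\<And>a b. g a = g b \<Longrightarrow> \<bar>a - b\<bar> < (1::real)" for g :: "real \<Rightarrow> int"
    proof
      fix x y assume xy: "x \<in> C" "y \<in> C" and eq: "(\<chi> i. of_int (g (x$i)) :: real^'m) = (\<chi> i. of_int (g (y$i)))"
      have "g (x$i) = g (y$i)" for i using arg_cong[OF eq, of "\<lambda>v. v$i"] by simp
      then have "\<bar>(x - y)$i\<bar> < 1" for i using g by simp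
      then have "infnorm (x - y) < 1" by (rule infnorm_lt1)
      then show "x = y" using sep xy by force
    qed
    have injf: "inj_on fl C" unfolding fl_def
      by (rule inj) (rule floor_close)
    have injc: "inj_on cl C" unfolding cl_def
      by (rule inj) (rule ceil_close)
    have flL: "fl x \<in> L" if xC: "x \<in> C" for x
    proof -
      obtain j where j: "j \<in> {1..k}" "\<forall>i. 0 \<le> x$i \<and> x$i \<le> u j $ i" using xC C(1) memM by blast
      have "\<forall>i. 0 \<le> fl x $i \<and> fl x $ i \<le> u j $ i"
        using j(2) by (auto simp: fl_def) (meson floor_correct order_trans)
      then have "fl x \<in> M" unfolding memM using j(1) by blast
      moreover have "fl x \<in> int_lattice" by (simp add: int_lattice_def fl_def)
      ultimately show ?thesis unfolding L_def by blast
    qed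
    have clL: "cl x \<in> L" if xC: "x \<in> C" for x
    proof -
      obtain j where j: "j \<in> {1..k}" "\<forall>i. 0 \<le> x$i \<and> x$i \<le> u j $ i" using xC C(1) memM by blast
      have "cl x $ i \<le> u j $ i" for i
      proof -
        obtain n where n: "u j $ i = of_int n" using uint(1)[OF j(1), of i] by (auto elim: Ints_cases)
        show ?thesis using j(2) n by (simp add: cl_def ceiling_le_iff) (metis n)
      qed
      moreover have "0 \<le> cl x $ i" for i using j(2) by (simp add: cl_def) (metis j(2) add.inverse_neutral less_eq_real_def neg_less_0_iff_less zero_less_one order_le_less_trans)
      ultimately have "cl x \<in> M" unfolding memM using j(1) by blast
      moreover have "cl x \<in> int_lattice" by (simp add: int_lattice_def cl_def)
      ultimately show ?thesis unfolding L_def by blast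
    qed
    have imf: "fl ` C = L"
      by (rule card_subset_eq[OF finL]) (use flL card_image[OF injf] C(2) in auto)
    have imc: "cl ` C = L"
      by (rule card_subset_eq[OF finL]) (use clL card_image[OF injc] C(2) in auto)
    define G where "G v = (\<Sum>i\<in>UNIV. v $ i)" for v :: "real^'m"
    have "sum G L = sum (G \<circ> fl) C" using sum.reindex[OF injf, of G] imf by simp
    moreover have "sum G L = sum (G \<circ> cl) C" using sum.reindex[OF injc, of G] imc by simp
    ultimately have "(\<Sum>x\<in>C. G (cl x) - G (fl x)) = 0" by (simp add: sum_subtractf)
    moreover have dif: "G (cl x) - G (fl x) = (\<Sum>i\<in>UNIV. of_int \<lceil>x$i\<rceil> - of_int \<lfloor>x$i\<rfloor>)" for x
      by (simp add: G_def cl_def fl_def sum_subtractf)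
    moreover have nn: "0 \<le> (of_int \<lceil>x$i\<rceil> - of_int \<lfloor>x$i\<rfloor> :: real)" for x i
      by (simp add: ceiling_correct floor_le_ceiling)
    ultimately have tot: "(\<Sum>x\<in>C. G (cl x) - G (fl x)) = 0" by simp
    have nnG: "0 \<le> G (cl x) - G (fl x)" if "x \<in> C" for x
      unfolding dif by (rule sum_nonneg) (rule nn)
    have z1: "\<forall>x\<in>C. G (cl x) - G (fl x) = 0"
      using iffD1[OF sum_nonneg_eq_0_iff[OF finC nnG] tot] .
    have "\<forall>x\<in>C. \<forall>i. (of_int \<lceil>x$i\<rceil> - of_int \<lfloor>x$i\<rfloor> :: real) = 0"
    proof (intro ballI allI)
      fix x i assume "x \<in> C"
      have fm: "finite (UNIV :: 'm set)" by simp
      from \<open>x \<in> C\<close> have "(\<Sum>i\<in>UNIV. of_int \<lceil>x$i\<rceil> - of_int \<lfloor>x$i\<rfloor> :: real) = 0"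
        using z1 dif by simp
      then have "\<forall>i\<in>UNIV. (of_int \<lceil>x$i\<rceil> - of_int \<lfloor>x$i\<rfloor> :: real) = 0"
        using iffD1[OF sum_nonneg_eq_0_iff[OF fm, of "\<lambda>i. (of_int \<lceil>x$i\<rceil> - of_int \<lfloor>x$i\<rfloor> :: real)", OF nn]] by blast
      then show "(of_int \<lceil>x$i\<rceil> - of_int \<lfloor>x$i\<rfloor> :: real) = 0" by simp
    qed
    then have "\<forall>x\<in>C. \<forall>i. x$i \<in> \<int>"
    proof (intro ballI allI)
      fix x i assume "\<forall>x\<in>C. \<forall>i. (of_int \<lceil>x$i\<rceil> - of_int \<lfloor>x$i\<rfloor> :: real) = 0" "x \<in> C"
      then have "(of_int \<lceil>x$i\<rceil> :: real) = of_int \<lfloor>x$i\<rfloor>" by simp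
      then have "x$i = of_int \<lfloor>x$i\<rfloor>" using floor_correct[of "x$i"] le_of_int_ceiling[of "x$i"] by linarith
      then show "x$i \<in> \<int>" by (metis Ints_of_int)
    qed
    then have "C \<subseteq> L" using C(1) unfolding L_def int_lattice_def by auto
    then show ?thesis using card_subset_eq[OF finL] C(2) by blast
  qed
  show ?thesis
  proof (intro allI iffI)
    fix C assume "C \<subseteq> box_union k u \<and> card C = card (box_union k u \<inter> int_lattice) \<and> min_dist_inf C = 1"
    then show "C = box_union k u \<inter> int_lattice" using main unfolding L_def M_def by blast
  next
    fix C assume "C = box_union k u \<inter> int_lattice"
    then show "C \<subseteq> box_union k u \<and> card C = card (box_union k u \<inter> int_lattice) \<and> min_dist_inf C = 1"
      using mdL unfolding L_def M_def by blast
  qed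
qed

end
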